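(* Let $\vdash\subseteq Sqt$ satisfy (A), (Mon), (Cut), (Com), ($\bot$), ($\wedge$I), ($\wedge$E), ($\to$0), ($\to$1), ($\to$2). Then: (1) if $\vdash$ satisfies (Prop$^-$), $\mathfrak M^c_\vdash\in\mathcal D_{P-}$; (2) if $\vdash$ satisfies (Tran) and (Prop$_{tr}$), $\mathfrak M^c_\vdash\in\mathcal D_{\mathbf V}$; (3) if $\vdash$ satisfies (Sym1), (Sym2), (Prop$_{sy}$), $\mathfrak M^c_\vdash\in\mathcal D_{\mathbf B^p}$; (4) if $\vdash$ satisfies (Refl), (Sym1), (Sym2), (Prop$_{sy}$), $\mathfrak M^c_\vdash\in\mathcal D_{\mathbf O}$; (5) if $\vdash$ satisfies (Tran), (Sym1), (Sym2), (Prop$_{tr}$), $\mathfrak M^c_\vdash\in\mathcal D_{\mathbf{KB4}^p}$; (6) if $\vdash$ satisfies (Refl), (Tran), (Prop$_{tr}$), $\mathfrak M^c_\vdash\in\mathcal D_{\mathbf I}$; (7) if $\vdash$ satisfies (Refl), (Sym1), (Sym2), (Tran), (Prop$_{tr}$), $\mathfrak M^c_\vdash\in\mathcal D_{\mathbf C}$.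
   Context: $Form$: $\varphi::=p\mid\bot\mid(\varphi\wedge\varphi)\mid(\varphi\to\varphi)$ over a countable set $P0$ ($\wedge$ left-associative, binds tighter than $\to$). A model is $(W,R,V)$, $W\neq\emptyset$, $R\subseteq W\times W$, $V:P0\to\wp(W)$. For $X\subseteq W$: $-X=W\setminus X$, $R[X]=\{t:\exists s\in X,\ sRt\}$, $R^\Box(X)=\{s:\forall t\,(sRt\Rightarrow t\in X)\}$. A proposition of $(W,R)$ is $X\subseteq W$ with $R[X]\cap R^\Box(R[X])\subseteq X$; an interpretation is a model with every $V(p)$ a proposition. $\mathcal D_{P-}$: models with $V(p)\subseteq R^\Box(-R^\Box(\emptyset)\cup V(p))$ for all $p$; $\mathcal D_{\mathbf B^p}$, $\mathcal D_{\mathbf V}$, $\mathcal D_{\mathbf{KB4}^p}$, $\mathcal D_{\mathbf I}$, $\mathcal D_{\mathbf O}$, $\mathcal D_{\mathbf C}$: interpretations whose relation is respectively symmetric; transitive; symmetric and transitive; reflexive and transitive; reflexive and symmetric; reflexive, symmetric and transitive. Sequents: $(\Gamma,\varphi)$ with $\Gamma\subseteq Form$; $\Gamma\vdash\varphi$ means $(\Gamma,\varphi)\in\vdash$; $\psi\vdash\varphi$ means $\{\psi\}\vdash\varphi$; $\vdash\varphi$ means $\emptyset\vdash\varphi$. Rules (all $\Gamma,\Delta\subseteq Form$, $p\in P0$, formulas): (A) $\Gamma\cup\{\varphi\}\vdash\varphi$; (Mon) $\Gamma\subseteq\Delta$, $\Gamma\vdash\varphi\Rightarrow\Delta\vdash\varphi$;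 (Cut) $\Gamma\cup\{\psi\}\vdash\varphi$, $\Delta\vdash\psi\Rightarrow\Gamma\cup\Delta\vdash\varphi$; (Com) $\Gamma\vdash\varphi\Rightarrow\Gamma'\vdash\varphi$ for a finite $\Gamma'\subseteq\Gamma$; ($\bot$) $\bot\vdash\varphi$; ($\wedge$I) $\{\varphi,\psi\}\vdash\varphi\wedge\psi$; ($\wedge$E) $\varphi\wedge\psi\vdash\varphi$, $\varphi\wedge\psi\vdash\psi$; ($\to$0) $\vdash\varphi\to\varphi$; ($\to$1) $\Gamma\vdash\varphi\Rightarrow\{\psi\to\chi:\chi\in\Gamma\}\vdash\psi\to\varphi$; ($\to$2) $\{\varphi\to\psi,\psi\to\chi\}\vdash\varphi\to\chi$; (Refl) $\{\varphi,\varphi\to\psi\}\vdash\psi$; (Tran) $\varphi\to\psi\vdash(\bot\to\bot)\to(\varphi\to\psi)$; (Sym1) $\Gamma\cup\{\psi\}\vdash\chi$ and $\Gamma\cup\{(\varphi\to\psi)\to\bot\}\vdash\chi\Rightarrow\Gamma\cup\{\varphi\}\vdash\chi$; (Sym2) $\{\alpha\wedge\psi\to\chi,\alpha\wedge((\varphi\to\psi)\to\bot)\to\chi\}\vdash\alpha\wedge\varphi\to\chi$; (Prop$^-$) $p\vdash((\bot\to\bot)\to\bot)\to p$; (Prop$_{tr}$) $p\vdash(\bot\to\bot)\to p$; (Prop$_{sy}$) $p\vdash((p\to\bot)\to\bot)\to p$. $\Gamma$ is $\vdash$-consistent iff $\Gamma\nvdash\varphi$ for some $\varphi$; $\vdash$-deduction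 closed iff $\Gamma\vdash\psi\Rightarrow\psi\in\Gamma$. For $n\ge2$, $\vdash$ satisfies $(\alpha,\{\beta_1,\dots,\beta_n\})$ iff (i) for all $\Gamma,\varphi$: if $\Gamma\cup\{\beta_i\}\vdash\varphi$ for all $i$ then $\Gamma\cup\{\alpha\}\vdash\varphi$, and (ii) for all $\varphi,\psi_1,\dots,\psi_n$: $\{\psi_i\wedge\beta_i\to\varphi:1\le i\le n\}\vdash\psi_1\wedge\dots\wedge\psi_n\wedge\alpha\to\varphi$. $\Gamma$ is $\vdash$-prime iff whenever $\vdash$ satisfies $(\alpha,\{\beta_1,\dots,\beta_n\})$ ($n\ge2$) and $\alpha\in\Gamma$, some $\beta_i\in\Gamma$. $\Gamma R_\to\Delta$ iff $\varphi\to\psi\in\Gamma$ and $\varphi\in\Delta$ imply $\psi\in\Delta$. Canonical model $\mathfrak M^c_\vdash=(W^c_\vdash,R^c_\vdash,V^c_\vdash)$: $W^c_\vdash$ the set of $\vdash$-consistent, deduction closed, prime subsets of $Form$; $R^c_\vdash=R_\to\cap(W^c_\vdash\times W^c_\vdash)$; $V^c_\vdash(p)=\{\Gamma\in W^c_\vdash:p\in\Gamma\}$. *)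

theory Defs
  imports Main "HOL-Library.Countable"
begin

datatype 'a form = Atom 'a | Bot | Conj "'a form" "'a form" | Imp "'a form" "'a form"

type_synonym 'a cons_rel = "'a form set \<Rightarrow> 'a form \<Rightarrow> bool"

fun conj_list :: "'a form list \<Rightarrow> 'a form" where
  "conj_list [] = Bot"
| "conj_list (\<psi> # \<psi>s) = foldl Conj \<psi> \<psi>s"

definition rule_A :: "'a cons_rel \<Rightarrow> bool" where
  "rule_A D \<longleftrightarrow> (\<forall>\<Gamma> \<phi>. D (\<Gamma> \<union> {\<phi>}) \<phi>)"
definition rule_Mon :: "'a cons_rel \<Rightarrow> bool" where
  "rule_Mon D \<longleftrightarrow> (\<forall>\<Gamma> \<Delta> \<phi>. \<Gamma> \<subseteq> \<Delta> \<and> D \<Gamma> \<phi> \<longrightarrow> D \<Delta> \<phi>)"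
definition rule_Cut :: "'a cons_rel \<Rightarrow> bool" where
  "rule_Cut D \<longleftrightarrow> (\<forall>\<Gamma> \<Delta> \<phi> \<psi>. D (\<Gamma> \<union> {\<psi>}) \<phi> \<and> D \<Delta> \<psi> \<longrightarrow> D (\<Gamma> \<union> \<Delta>) \<phi>)"
definition rule_Com :: "'a cons_rel \<Rightarrow> bool" where
  "rule_Com D \<longleftrightarrow> (\<forall>\<Gamma> \<phi>. D \<Gamma> \<phi> \<longrightarrow> (\<exists>\<Gamma>'. finite \<Gamma>' \<and> \<Gamma>' \<subseteq> \<Gamma> \<and> D \<Gamma>' \<phi>))"
definition rule_Bot :: "'a cons_rel \<Rightarrow> bool" where
  "rule_Bot D \<longleftrightarrow> (\<forall>\<phi>. D {Bot} \<phi>)"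
definition rule_ConjI :: "'a cons_rel \<Rightarrow> bool" where
  "rule_ConjI D \<longleftrightarrow> (\<forall>\<phi> \<psi>. D {\<phi>, \<psi>} (Conj \<phi> \<psi>))"
definition rule_ConjE :: "'a cons_rel \<Rightarrow> bool" where
  "rule_ConjE D \<longleftrightarrow> (\<forall>\<phi> \<psi>. D {Conj \<phi> \<psi>} \<phi> \<and> D {Conj \<phi> \<psi>} \<psi>)"
definition rule_Imp0 :: "'a cons_rel \<Rightarrow> bool" where
  "rule_Imp0 D \<longleftrightarrow> (\<forall>\<phi>. D {} (Imp \<phi> \<phi>))"
definition rule_Imp1 :: "'a cons_rel \<Rightarrow> bool" where
  "rule_Imp1 D \<longleftrightarrow> (\<forall>\<Gamma> \<phi> \<psi>. D \<Gamma> \<phi> \<longrightarrow> D {Imp \<psi> \<chi> | \<chi>. \<chi> \<in> \<Gamma>} (Imp \<psi> \<phi>))"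
definition rule_Imp2 :: "'a cons_rel \<Rightarrow> bool" where
  "rule_Imp2 D \<longleftrightarrow> (\<forall>\<phi> \<psi> \<chi>. D {Imp \<phi> \<psi>, Imp \<psi> \<chi>} (Imp \<phi> \<chi>))"
definition rule_Refl :: "'a cons_rel \<Rightarrow> bool" where
  "rule_Refl D \<longleftrightarrow> (\<forall>\<phi> \<psi>. D {\<phi>, Imp \<phi> \<psi>} \<psi>)"
definition rule_Tran :: "'a cons_rel \<Rightarrow> bool" where
  "rule_Tran D \<longleftrightarrow> (\<forall>\<phi> \<psi>. D {Imp \<phi> \<psi>} (Imp (Imp Bot Bot) (Imp \<phi> \<psi>)))"
definition rule_Sym1 :: "'a cons_rel \<Rightarrow> bool" where
  "rule_Sym1 D \<longleftrightarrow> (\<forall>\<Gamma> \<phi> \<psi> \<chi>. D (\<Gamma> \<union> {\<psi>}) \<chi> \<and> D (\<Gamma> \<union> {Imp (Imp \<phi> \<psi>) Bot}) \<chi>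
                       \<longrightarrow> D (\<Gamma> \<union> {\<phi>}) \<chi>)"
definition rule_Sym2 :: "'a cons_rel \<Rightarrow> bool" where
  "rule_Sym2 D \<longleftrightarrow> (\<forall>\<alpha> \<phi> \<psi> \<chi>.
     D {Imp (Conj \<alpha> \<psi>) \<chi>, Imp (Conj \<alpha> (Imp (Imp \<phi> \<psi>) Bot)) \<chi>} (Imp (Conj \<alpha> \<phi>) \<chi>))"
definition rule_PropMinus :: "'a cons_rel \<Rightarrow> bool" where
  "rule_PropMinus D \<longleftrightarrow> (\<forall>p. D {Atom p} (Imp (Imp (Imp Bot Bot) Bot) (Atom p)))"
definition rule_PropTr :: "'a cons_rel \<Rightarrow> bool" where
  "rule_PropTr D \<longleftrightarrow> (\<forall>p. D {Atom p} (Imp (Imp Bot Bot) (Atom p)))"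
definition rule_PropSy :: "'a cons_rel \<Rightarrow> bool" where
  "rule_PropSy D \<longleftrightarrow> (\<forall>p. D {Atom p} (Imp (Imp (Imp (Atom p) Bot) Bot) (Atom p)))"

definition consistent :: "'a cons_rel \<Rightarrow> 'a form set \<Rightarrow> bool" where
  "consistent D \<Gamma> \<longleftrightarrow> (\<exists>\<phi>. \<not> D \<Gamma> \<phi>)"
definition deduction_closed :: "'a cons_rel \<Rightarrow> 'a form set \<Rightarrow> bool" where
  "deduction_closed D \<Gamma> \<longleftrightarrow> (\<forall>\<psi>. D \<Gamma> \<psi> \<longrightarrow> \<psi> \<in> \<Gamma>)"

text \<open>D satisfies (alpha, {beta_1,...,beta_n}), n >= 2; the beta_i are given as a list.\<close>
definition satisfies_pair :: "'a cons_rel \<Rightarrow> 'a form \<Rightarrow> 'a form list \<Rightarrow> bool" where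
  "satisfies_pair D \<alpha> \<beta>s \<longleftrightarrow> length \<beta>s \<ge> 2 \<and>
     (\<forall>\<Gamma> \<phi>. (\<forall>\<beta>\<in>set \<beta>s. D (\<Gamma> \<union> {\<beta>}) \<phi>) \<longrightarrow> D (\<Gamma> \<union> {\<alpha>}) \<phi>) \<and>
     (\<forall>\<phi> \<psi>s. length \<psi>s = length \<beta>s \<longrightarrow>
        D {Imp (Conj (\<psi>s ! i) (\<beta>s ! i)) \<phi> | i. i < length \<beta>s}
          (Imp (Conj (conj_list \<psi>s) \<alpha>) \<phi>))"

definition prime :: "'a cons_rel \<Rightarrow> 'a form set \<Rightarrow> bool" where
  "prime D \<Gamma> \<longleftrightarrow> (\<forall>\<alpha> \<beta>s. satisfies_pair D \<alpha> \<beta>s \<and> \<alpha> \<in> \<Gamma> \<longrightarrow> (\<exists>\<beta>\<in>set \<beta>s. \<beta> \<in> \<Gamma>))"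

definition R_imp :: "'a form set \<Rightarrow> 'a form set \<Rightarrow> bool" where
  "R_imp \<Gamma> \<Delta> \<longleftrightarrow> (\<forall>\<phi> \<psi>. Imp \<phi> \<psi> \<in> \<Gamma> \<and> \<phi> \<in> \<Delta> \<longrightarrow> \<psi> \<in> \<Delta>)"

definition Wc :: "'a cons_rel \<Rightarrow> 'a form set set" where
  "Wc D = {\<Gamma>. consistent D \<Gamma> \<and> deduction_closed D \<Gamma> \<and> prime D \<Gamma>}"
definition Rc :: "'a cons_rel \<Rightarrow> ('a form set \<times> 'a form set) set" where
  "Rc D = {(\<Gamma>, \<Delta>). \<Gamma> \<in> Wc D \<and> \<Delta> \<in> Wc D \<and> R_imp \<Gamma> \<Delta>}"
definition Vc :: "'a cons_rel \<Rightarrow> 'a \<Rightarrow> 'a form set set" where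
  "Vc D p = {\<Gamma> \<in> Wc D. Atom p \<in> \<Gamma>}"

definition is_model :: "'w set \<Rightarrow> ('w \<times> 'w) set \<Rightarrow> ('a \<Rightarrow> 'w set) \<Rightarrow> bool" where
  "is_model W R V \<longleftrightarrow> W \<noteq> {} \<and> R \<subseteq> W \<times> W \<and> (\<forall>p. V p \<subseteq> W)"

definition Rimg :: "('w \<times> 'w) set \<Rightarrow> 'w set \<Rightarrow> 'w set" where
  "Rimg R X = {t. \<exists>s\<in>X. (s, t) \<in> R}"
definition Rbox :: "'w set \<Rightarrow> ('w \<times> 'w) set \<Rightarrow> 'w set \<Rightarrow> 'w set" where
  "Rbox W R X = {s \<in> W. \<forall>t. (s, t) \<in> R \<longrightarrow> t \<in> X}"

definition is_proposition :: "'w set \<Rightarrow> ('w \<times> 'w) set \<Rightarrow> 'w set \<Rightarrow> bool" where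
  "is_proposition W R X \<longleftrightarrow> X \<subseteq> W \<and> Rimg R X \<inter> Rbox W R (Rimg R X) \<subseteq> X"

definition is_interpretation :: "'w set \<Rightarrow> ('w \<times> 'w) set \<Rightarrow> ('a \<Rightarrow> 'w set) \<Rightarrow> bool" where
  "is_interpretation W R V \<longleftrightarrow> is_model W R V \<and> (\<forall>p. is_proposition W R (V p))"

definition in_D_Pminus :: "'w set \<Rightarrow> ('w \<times> 'w) set \<Rightarrow> ('a \<Rightarrow> 'w set) \<Rightarrow> bool" where
  "in_D_Pminus W R V \<longleftrightarrow> is_model W R V \<and>
     (\<forall>p. V p \<subseteq> Rbox W R ((W - Rbox W R {}) \<union> V p))"

definition in_D_Bp :: "'w set \<Rightarrow> ('w \<times> 'w) set \<Rightarrow> ('a \<Rightarrow> 'w set) \<Rightarrow> bool" where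
  "in_D_Bp W R V \<longleftrightarrow> is_interpretation W R V \<and> sym R"
definition in_D_V :: "'w set \<Rightarrow> ('w \<times> 'w) set \<Rightarrow> ('a \<Rightarrow> 'w set) \<Rightarrow> bool" where
  "in_D_V W R V \<longleftrightarrow> is_interpretation W R V \<and> trans R"
definition in_D_KB4p :: "'w set \<Rightarrow> ('w \<times> 'w) set \<Rightarrow> ('a \<Rightarrow> 'w set) \<Rightarrow> bool" where
  "in_D_KB4p W R V \<longleftrightarrow> is_interpretation W R V \<and> sym R \<and> trans R"
definition in_D_I :: "'w set \<Rightarrow> ('w \<times> 'w) set \<Rightarrow> ('a \<Rightarrow> 'w set) \<Rightarrow> bool" where
  "in_D_I W R V \<longleftrightarrow> is_interpretation W R V \<and> refl_on W R \<and> trans R"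
definition in_D_O :: "'w set \<Rightarrow> ('w \<times> 'w) set \<Rightarrow> ('a \<Rightarrow> 'w set) \<Rightarrow> bool" where
  "in_D_O W R V \<longleftrightarrow> is_interpretation W R V \<and> refl_on W R \<and> sym R"
definition in_D_C :: "'w set \<Rightarrow> ('w \<times> 'w) set \<Rightarrow> ('a \<Rightarrow> 'w set) \<Rightarrow> bool" where
  "in_D_C W R V \<longleftrightarrow> is_interpretation W R V \<and> refl_on W R \<and> sym R \<and> trans R"

end

theory Submission
  imports Defs
begin

lemma chain_fin:
  assumes "C \<in> chains A" "C \<noteq> {}" "finite G" "G \<subseteq> \<Union>C"
  shows "\<exists>c\<in>C. G \<subseteq> c"
  using finite_subset_Union_chain[of G C A] assms by (auto simp: chains_alt_def)

locale cr =
  fixes D :: "'a form set \<Rightarrow> 'a form \<Rightarrow> bool"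
  assumes rA: "rule_A D" and rMon: "rule_Mon D" and rCut: "rule_Cut D" and rCom: "rule_Com D"
    and rBot: "rule_Bot D" and rCI: "rule_ConjI D" and rCE: "rule_ConjE D"
    and rI0: "rule_Imp0 D" and rI1: "rule_Imp1 D" and rI2: "rule_Imp2 D"
begin

lemma ax: "\<phi> \<in> \<Gamma> \<Longrightarrow> D \<Gamma> \<phi>"
proof -
  assume "\<phi> \<in> \<Gamma>"
  then have "\<Gamma> \<union> {\<phi>} = \<Gamma>" by auto
  then show ?thesis using rA unfolding rule_A_def by metis
qed
lemma mon: "D \<Gamma> \<phi> \<Longrightarrow> \<Gamma> \<subseteq> \<Delta> \<Longrightarrow> D \<Delta> \<phi>" using rMon unfolding rule_Mon_def by blast
lemma cut: "D (\<Gamma> \<union> {\<psi>}) \<phi> \<Longrightarrow> D \<Delta> \<psi> \<Longrightarrow> D (\<Gamma> \<union> \<Delta>) \<phi>" using rCut unfolding rule_Cut_def by blast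
lemma cut1: "D (insert \<psi> \<Gamma>) \<phi> \<Longrightarrow> D \<Gamma> \<psi> \<Longrightarrow> D \<Gamma> \<phi>"
  using cut[of \<Gamma> \<psi> \<phi> \<Gamma>] by simp
lemma com: "D \<Gamma> \<phi> \<Longrightarrow> \<exists>\<Gamma>'. finite \<Gamma>' \<and> \<Gamma>' \<subseteq> \<Gamma> \<and> D \<Gamma>' \<phi>" using rCom unfolding rule_Com_def by blast
lemma bot: "D {Bot} \<phi>" using rBot unfolding rule_Bot_def by blast
lemma conjI': "D {\<phi>,\<psi>} (Conj \<phi> \<psi>)" using rCI unfolding rule_ConjI_def by blast
lemma conjE1: "D {Conj \<phi> \<psi>} \<phi>" using rCE unfolding rule_ConjE_def by blast
lemma conjE2: "D {Conj \<phi> \<psi>} \<psi>" using rCE unfolding rule_ConjE_def by blast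
lemma imp0: "D {} (Imp \<phi> \<phi>)" using rI0 unfolding rule_Imp0_def by blast
lemma imp1: "D \<Gamma> \<phi> \<Longrightarrow> D {Imp \<psi> \<chi> | \<chi>. \<chi> \<in> \<Gamma>} (Imp \<psi> \<phi>)" using rI1 unfolding rule_Imp1_def by blast
lemma imp2: "D {Imp \<phi> \<psi>, Imp \<psi> \<chi>} (Imp \<phi> \<chi>)" using rI2 unfolding rule_Imp2_def by blast

lemma multicut:
  assumes "finite S" "\<forall>x\<in>S. D \<Gamma> x" "D (T \<union> S) y" shows "D (T \<union> \<Gamma>) y"
  using assms
proof (induction S arbitrary: T rule: finite_induct)
  case empty then show ?case by (auto intro: mon)
next
  case (insert x S)
  have eq: "T \<union> insert x S = (T \<union> S) \<union> {x}" by auto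
  have "D ((T \<union> S) \<union> \<Gamma>) y" using cut[of "T \<union> S" x y \<Gamma>] insert.prems eq by auto
  then have "D ((T \<union> \<Gamma>) \<union> S) y" by (simp add: Un_ac)
  then have "D ((T \<union> \<Gamma>) \<union> \<Gamma>) y" using insert.IH insert.prems by blast
  then show ?case by (simp add: Un_ac)
qed

lemma multicut': "finite S \<Longrightarrow> \<forall>x\<in>S. D \<Gamma> x \<Longrightarrow> D S y \<Longrightarrow> D \<Gamma> y"
  using multicut[of S \<Gamma> "{}" y] by simp

lemma trans1: "D {A} B \<Longrightarrow> D {B} C \<Longrightarrow> D {A} C"
  using multicut'[of "{B}" "{A}" C] by simp

lemma thm_of: "D {A} B \<Longrightarrow> D {} (Imp A B)"
proof -
  assume "D {A} B"
  then have "D {Imp A \<chi> | \<chi>. \<chi> \<in> {A}} (Imp A B)" by (rule imp1)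
  moreover have "{Imp A \<chi> | \<chi>. \<chi> \<in> {A}} = {Imp A A}" by auto
  ultimately have "D (insert (Imp A A) {}) (Imp A B)" by simp
  then show ?thesis using cut1 imp0 by blast
qed

lemma foldl_E: "y \<in> insert a (set xs) \<Longrightarrow> D {foldl Conj a xs} y"
proof (induction xs arbitrary: a y)
  case Nil then show ?case by (auto intro: ax)
next
  case (Cons x xs)
  show ?case
  proof (cases "y \<in> set xs")
    case True then show ?thesis using Cons.IH[of y "Conj a x"] by simp
  next
    case False
    have h: "D {foldl Conj (Conj a x) xs} (Conj a x)" using Cons.IH[of "Conj a x" "Conj a x"] by simp
    from False Cons.prems have "y = a \<or> y = x" by auto
    then have "D {Conj a x} y" using conjE1 conjE2 by blast
    then show ?thesis using trans1[OF h] by simp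
  qed
qed

lemma foldl_I: "D (insert a (set xs)) (foldl Conj a xs)"
proof (induction xs arbitrary: a)
  case Nil then show ?case by (auto intro: ax)
next
  case (Cons x xs)
  let ?G = "insert a (insert x (set xs))"
  have "D (insert (Conj a x) ?G) (foldl Conj (Conj a x) xs)"
    using Cons.IH[of "Conj a x"] by (rule mon) auto
  moreover have "D ?G (Conj a x)" using conjI'[of a x] by (rule mon) auto
  ultimately show ?case using cut1 by simp
qed

lemma cl_E: "y \<in> set xs \<Longrightarrow> D {conj_list xs} y"
  by (cases xs) (auto intro: foldl_E)

lemma cl_I: "xs \<noteq> [] \<Longrightarrow> D (set xs) (conj_list xs)"
  by (cases xs) (auto intro: foldl_I)

lemma cl_intro: "xs \<noteq> [] \<Longrightarrow> \<forall>y\<in>set xs. D \<Gamma> y \<Longrightarrow> D \<Gamma> (conj_list xs)"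
  using multicut' cl_I by blast

lemma dc_mem: "deduction_closed D \<Gamma> \<Longrightarrow> S \<subseteq> \<Gamma> \<Longrightarrow> D S x \<Longrightarrow> x \<in> \<Gamma>"
  unfolding deduction_closed_def using mon by blast

lemma pull: "deduction_closed D \<Delta> \<Longrightarrow> Imp B C \<in> \<Delta> \<Longrightarrow> D {A} B \<Longrightarrow> Imp A C \<in> \<Delta>"
proof -
  assume dc: "deduction_closed D \<Delta>" and i: "Imp B C \<in> \<Delta>" and d: "D {A} B"
  have "Imp A B \<in> \<Delta>" using dc_mem[OF dc, of "{}"] thm_of[OF d] by simp
  then show ?thesis using dc_mem[OF dc, of "{Imp A B, Imp B C}"] imp2 i by simp
qed

lemma imp2_in: "deduction_closed D \<Delta> \<Longrightarrow> Imp A B \<in> \<Delta> \<Longrightarrow> Imp B C \<in> \<Delta> \<Longrightarrow> Imp A C \<in> \<Delta>"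
  using dc_mem[of \<Delta> "{Imp A B, Imp B C}"] imp2 by simp

lemma incons: "deduction_closed D \<Gamma> \<Longrightarrow> Bot \<in> \<Gamma> \<Longrightarrow> \<not> consistent D \<Gamma>"
  unfolding consistent_def using bot mon by blast

end

context cr
begin

lemma W_ne: assumes "consistent D {}" shows "Wc D \<noteq> {}"
proof -
  obtain \<phi>0 where n0: "\<not> D {} \<phi>0" using assms unfolding consistent_def by blast
  let ?F = "{\<Gamma>. \<not> D \<Gamma> \<phi>0}"
  have "\<forall>C\<in>chains ?F. \<Union>C \<in> ?F"
  proof
    fix C assume C: "C \<in> chains ?F"
    show "\<Union>C \<in> ?F"
    proof (rule ccontr)
      assume "\<Union>C \<notin> ?F"
      then have "D (\<Union>C) \<phi>0" by simp
      then obtain G where G: "finite G" "G \<subseteq> \<Union>C" "D G \<phi>0" using com by blast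
      show False
      proof (cases "C = {}")
        case True then have "G = {}" using G by auto
        then show False using G n0 by simp
      next
        case False
        then obtain c where "c \<in> C" "G \<subseteq> c" using chain_fin[OF C False G(1,2)] by blast
        moreover have "c \<in> ?F" using C \<open>c \<in> C\<close> chainsD2 by blast
        ultimately show False using G(3) mon[of G \<phi>0 c] by simp
      qed
    qed
  qed
  from Zorn_Lemma[OF this] obtain M where M: "M \<in> ?F" "\<forall>X\<in>?F. M \<subseteq> X \<longrightarrow> X = M" by blast
  have max: "\<psi> \<notin> M \<Longrightarrow> D (M \<union> {\<psi>}) \<phi>0" for \<psi>
  proof (rule ccontr)
    assume "\<psi> \<notin> M" "\<not> D (M \<union> {\<psi>}) \<phi>0"
    then have "M \<union> {\<psi>} \<in> ?F" by simp
    then have "M \<union> {\<psi>} = M" using M(2) by blast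
    then show False using \<open>\<psi> \<notin> M\<close> by auto
  qed
  have cons: "consistent D M" using M unfolding consistent_def by blast
  have dc: "deduction_closed D M" unfolding deduction_closed_def
  proof (intro allI impI)
    fix \<psi> assume "D M \<psi>"
    show "\<psi> \<in> M"
    proof (rule ccontr)
      assume "\<psi> \<notin> M"
      then have "D (insert \<psi> M) \<phi>0" using max by simp
      then have "D M \<phi>0" using cut1 \<open>D M \<psi>\<close> by blast
      then show False using M by simp
    qed
  qed
  have pr: "prime D M" unfolding prime_def
  proof (intro allI impI)
    fix \<alpha> \<beta>s assume a: "satisfies_pair D \<alpha> \<beta>s \<and> \<alpha> \<in> M"
    show "\<exists>\<beta>\<in>set \<beta>s. \<beta> \<in> M"
    proof (rule ccontr)
      assume "\<not> ?thesis"
      then have "\<forall>\<beta>\<in>set \<beta>s. D (M \<union> {\<beta>}) \<phi>0" using max by blast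
      then have "D (M \<union> {\<alpha>}) \<phi>0" using a unfolding satisfies_pair_def by blast
      moreover have "M \<union> {\<alpha>} = M" using a by auto
      ultimately show False using M by simp
    qed
  qed
  show ?thesis using cons dc pr unfolding Wc_def by blast
qed

definition good :: "'a form set \<Rightarrow> 'a form \<Rightarrow> 'a form \<Rightarrow> 'a form set \<Rightarrow> bool" where
  "good \<Delta> \<phi> \<chi> \<Theta> \<longleftrightarrow> (\<forall>\<theta>s. set \<theta>s \<subseteq> \<Theta> \<longrightarrow> Imp (conj_list (\<phi> # \<theta>s)) \<chi> \<notin> \<Delta>)"

lemma good_ext:
  assumes dc: "deduction_closed D \<Delta>" and g: "good \<Delta> \<phi> \<chi> \<Theta>" and d: "D (insert \<phi> \<Theta>) \<psi>"
  shows "good \<Delta> \<phi> \<chi> (insert \<psi> \<Theta>)"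
  unfolding good_def
proof (intro allI impI notI)
  fix \<theta>s assume s: "set \<theta>s \<subseteq> insert \<psi> \<Theta>" and i: "Imp (conj_list (\<phi> # \<theta>s)) \<chi> \<in> \<Delta>"
  obtain G where G: "finite G" "G \<subseteq> insert \<phi> \<Theta>" "D G \<psi>" using com[OF d] by blast
  have "finite (G - {\<phi>})" using G(1) by simp
  then obtain gs where gs: "set gs = G - {\<phi>}" using finite_list by blast
  define \<theta>s' where "\<theta>s' = filter (\<lambda>x. x \<noteq> \<psi>) \<theta>s @ gs"
  have s': "set \<theta>s' \<subseteq> \<Theta>"
  proof
    fix x assume "x \<in> set \<theta>s'"
    then have "(x \<in> set \<theta>s \<and> x \<noteq> \<psi>) \<or> x \<in> G - {\<phi>}" unfolding \<theta>s'_def gs[symmetric] by auto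
    then show "x \<in> \<Theta>" using s G(2) by blast
  qed
  let ?X = "conj_list (\<phi> # \<theta>s')"
  have Gs: "\<forall>g\<in>G. D {?X} g"
  proof
    fix g assume "g \<in> G"
    then have "g \<in> set (\<phi> # \<theta>s')" using gs unfolding \<theta>s'_def by auto
    then show "D {?X} g" by (rule cl_E)
  qed
  have "D {?X} \<psi>" using multicut'[OF G(1) Gs G(3)] .
  have "\<forall>y\<in>set (\<phi> # \<theta>s). D {?X} y"
  proof
    fix y assume y: "y \<in> set (\<phi> # \<theta>s)"
    show "D {?X} y"
    proof (cases "y = \<psi>")
      case True then show ?thesis using \<open>D {?X} \<psi>\<close> by simp
    next
      case False
      then have "y \<in> set (\<phi> # \<theta>s')" using y unfolding \<theta>s'_def by auto
      then show ?thesis by (rule cl_E)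
    qed
  qed
  then have "D {?X} (conj_list (\<phi> # \<theta>s))" using cl_intro[of "\<phi> # \<theta>s"] by simp
  then have "Imp ?X \<chi> \<in> \<Delta>" by (rule pull[OF dc i])
  moreover have "Imp ?X \<chi> \<notin> \<Delta>" using g s' unfolding good_def by simp
  ultimately show False by simp
qed

end

context cr
begin

lemma conjL: "D {A} y \<Longrightarrow> D {Conj A B} y"
  using trans1[OF conjE1] .

lemma existence:
  assumes W: "\<Delta> \<in> Wc D" and ni: "Imp \<phi> \<chi> \<notin> \<Delta>"
  shows "\<exists>\<Theta>\<in>Wc D. R_imp \<Delta> \<Theta> \<and> \<phi> \<in> \<Theta> \<and> \<chi> \<notin> \<Theta>"
proof -
  have dc: "deduction_closed D \<Delta>" using W unfolding Wc_def by simp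
  let ?F = "{\<Theta>. good \<Delta> \<phi> \<chi> \<Theta>}"
  have g0: "good \<Delta> \<phi> \<chi> {}" using ni unfolding good_def by simp
  have "\<forall>C\<in>chains ?F. \<Union>C \<in> ?F"
  proof
    fix C assume C: "C \<in> chains ?F"
    show "\<Union>C \<in> ?F" unfolding mem_Collect_eq good_def
    proof (intro allI impI)
      fix \<theta>s assume s: "set \<theta>s \<subseteq> \<Union>C"
      show "Imp (conj_list (\<phi> # \<theta>s)) \<chi> \<notin> \<Delta>"
      proof (cases "C = {}")
        case True then have "\<theta>s = []" using s by auto
        then show ?thesis using ni by simp
      next
        case False
        then obtain c where c: "c \<in> C" "set \<theta>s \<subseteq> c" using chain_fin[OF C False _ s] by blast
        then have "good \<Delta> \<phi> \<chi> c" using C chainsD2 by blast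
        then show ?thesis using c(2) unfolding good_def by blast
      qed
    qed
  qed
  from Zorn_Lemma[OF this] obtain M where M: "M \<in> ?F" "\<forall>X\<in>?F. M \<subseteq> X \<longrightarrow> X = M" by blast
  have gM: "good \<Delta> \<phi> \<chi> M" using M(1) by simp
  have maxg: "good \<Delta> \<phi> \<chi> (insert \<psi> M) \<Longrightarrow> \<psi> \<in> M" for \<psi>
  proof -
    assume "good \<Delta> \<phi> \<chi> (insert \<psi> M)"
    then have "insert \<psi> M = M" using M(2) by blast
    then show ?thesis by auto
  qed
  have cl: "D (insert \<phi> M) \<psi> \<Longrightarrow> \<psi> \<in> M" for \<psi>
  proof -
    assume "D (insert \<phi> M) \<psi>"
    from good_ext[OF dc gM this] show ?thesis by (rule maxg)
  qed
  have phiM: "\<phi> \<in> M" using cl[OF ax[of \<phi> "insert \<phi> M"]] by simp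
  have dcM: "deduction_closed D M" unfolding deduction_closed_def
  proof (intro allI impI)
    fix \<psi> assume "D M \<psi>"
    then have "D (insert \<phi> M) \<psi>" using mon[of M \<psi> "insert \<phi> M"] by auto
    then show "\<psi> \<in> M" by (rule cl)
  qed
  have chiM: "\<chi> \<notin> M"
  proof
    assume "\<chi> \<in> M"
    then have "set [\<chi>] \<subseteq> M" by simp
    moreover have "Imp (conj_list [\<phi>, \<chi>]) \<chi> \<in> \<Delta>"
      using dc_mem[OF dc, of "{}"] thm_of[OF conjE2[of \<phi> \<chi>]] by simp
    ultimately show False using gM unfolding good_def by blast
  qed
  have consM: "consistent D M" using chiM dcM unfolding consistent_def deduction_closed_def by blast
  have R: "R_imp \<Delta> M" unfolding R_imp_def
  proof (intro allI impI)
    fix a b assume ab: "Imp a b \<in> \<Delta> \<and> a \<in> M"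
    have "good \<Delta> \<phi> \<chi> (insert b M)" unfolding good_def
    proof (intro allI impI notI)
      fix \<theta>s assume s: "set \<theta>s \<subseteq> insert b M" and i: "Imp (conj_list (\<phi> # \<theta>s)) \<chi> \<in> \<Delta>"
      define \<theta>s' where "\<theta>s' = filter (\<lambda>x. x \<noteq> b) \<theta>s @ [a]"
      have s': "set \<theta>s' \<subseteq> M" using s ab unfolding \<theta>s'_def by auto
      let ?X = "conj_list (\<phi> # \<theta>s')"
      have "a \<in> set (\<phi> # \<theta>s')" unfolding \<theta>s'_def by simp
      then have "D {?X} a" by (rule cl_E)
      then have "D {} (Imp ?X a)" by (rule thm_of)
      then have "Imp ?X a \<in> \<Delta>" using dc_mem[OF dc, of "{}"] by simp
      then have Xb: "Imp ?X b \<in> \<Delta>" using imp2_in[OF dc _ conjunct1[OF ab]] by simp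
      have XX: "Imp ?X ?X \<in> \<Delta>" using dc_mem[OF dc, of "{}"] imp0[of ?X] by simp
      have "\<forall>y\<in>set (\<phi> # \<theta>s). D {?X, b} y"
      proof
        fix y assume y: "y \<in> set (\<phi> # \<theta>s)"
        show "D {?X, b} y"
        proof (cases "y = b")
          case True then show ?thesis by (auto intro: ax)
        next
          case False
          then have "y \<in> set (\<phi> # \<theta>s')" using y unfolding \<theta>s'_def by auto
          then have "D {?X} y" by (rule cl_E)
          then show ?thesis by (rule mon) auto
        qed
      qed
      then have "D {?X, b} (conj_list (\<phi> # \<theta>s))" using cl_intro[of "\<phi> # \<theta>s"] by simp
      then have "D {Imp ?X c | c. c \<in> {?X, b}} (Imp ?X (conj_list (\<phi> # \<theta>s)))" by (rule imp1)
      moreover have "{Imp ?X c | c. c \<in> {?X, b}} \<subseteq> \<Delta>" using XX Xb by auto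
      ultimately have "Imp ?X (conj_list (\<phi> # \<theta>s)) \<in> \<Delta>" by (rule dc_mem[OF dc, rotated])
      then have "Imp ?X \<chi> \<in> \<Delta>" using imp2_in[OF dc _ i] by simp
      moreover have "Imp ?X \<chi> \<notin> \<Delta>" using gM s' unfolding good_def by simp
      ultimately show False by simp
    qed
    then show "b \<in> M" by (rule maxg)
  qed
  have pr: "prime D M" unfolding prime_def
  proof (intro allI impI)
    fix \<alpha> \<beta>s assume a: "satisfies_pair D \<alpha> \<beta>s \<and> \<alpha> \<in> M"
    show "\<exists>\<beta>\<in>set \<beta>s. \<beta> \<in> M"
    proof (rule ccontr)
      assume "\<not> ?thesis"
      then have "\<forall>\<beta>\<in>set \<beta>s. \<not> good \<Delta> \<phi> \<chi> (insert \<beta> M)" using maxg by blast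
      then have "\<forall>\<beta>\<in>set \<beta>s. \<exists>\<theta>s. set \<theta>s \<subseteq> insert \<beta> M \<and> Imp (conj_list (\<phi> # \<theta>s)) \<chi> \<in> \<Delta>"
        unfolding good_def by blast
      from bchoice[OF this] obtain f where f: "\<forall>\<beta>\<in>set \<beta>s. set (f \<beta>) \<subseteq> insert \<beta> M \<and> Imp (conj_list (\<phi> # f \<beta>)) \<chi> \<in> \<Delta>"
        by blast
      define ps where "ps = (\<lambda>\<beta>. conj_list (\<phi> # filter (\<lambda>x. x \<noteq> \<beta>) (f \<beta>)))"
      define \<psi>s where "\<psi>s = map ps \<beta>s"
      have one: "Imp (Conj (ps \<beta>) \<beta>) \<chi> \<in> \<Delta>" if b: "\<beta> \<in> set \<beta>s" for \<beta>
      proof -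
        have "\<forall>y\<in>set (\<phi> # f \<beta>). D {Conj (ps \<beta>) \<beta>} y"
        proof
          fix y assume y: "y \<in> set (\<phi> # f \<beta>)"
          show "D {Conj (ps \<beta>) \<beta>} y"
          proof (cases "y = \<beta>")
            case True then show ?thesis using conjE2 by simp
          next
            case False
            then have "y \<in> set (\<phi> # filter (\<lambda>x. x \<noteq> \<beta>) (f \<beta>))" using y by auto
            then show ?thesis unfolding ps_def by (intro conjL cl_E)
          qed
        qed
        then have "D {Conj (ps \<beta>) \<beta>} (conj_list (\<phi> # f \<beta>))" using cl_intro[of "\<phi> # f \<beta>"] by simp
        moreover have "Imp (conj_list (\<phi> # f \<beta>)) \<chi> \<in> \<Delta>" using f b by simp
        ultimately show ?thesis using pull[OF dc] by simp
      qed
      have len: "length \<psi>s = length \<beta>s" unfolding \<psi>s_def by simp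
      have "D {Imp (Conj (\<psi>s ! i) (\<beta>s ! i)) \<chi> | i. i < length \<beta>s} (Imp (Conj (conj_list \<psi>s) \<alpha>) \<chi>)"
      proof -
        have C: "\<forall>\<phi>' \<psi>s'. length \<psi>s' = length \<beta>s \<longrightarrow>
          D {Imp (Conj (\<psi>s' ! i) (\<beta>s ! i)) \<phi>' | i. i < length \<beta>s} (Imp (Conj (conj_list \<psi>s') \<alpha>) \<phi>')"
          using a unfolding satisfies_pair_def by (elim conjE)
        show ?thesis using mp[OF spec[OF spec[OF C, of \<chi>], of \<psi>s] len] .
      qed
      moreover have "{Imp (Conj (\<psi>s ! i) (\<beta>s ! i)) \<chi> | i. i < length \<beta>s} \<subseteq> \<Delta>"
      proof
        fix z assume "z \<in> {Imp (Conj (\<psi>s ! i) (\<beta>s ! i)) \<chi> | i. i < length \<beta>s}"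
        then obtain i where i: "i < length \<beta>s" "z = Imp (Conj (\<psi>s ! i) (\<beta>s ! i)) \<chi>" by blast
        then have "\<psi>s ! i = ps (\<beta>s ! i)" unfolding \<psi>s_def by simp
        moreover have "\<beta>s ! i \<in> set \<beta>s" using i(1) by simp
        ultimately show "z \<in> \<Delta>" using one i(2) by simp
      qed
      ultimately have P: "Imp (Conj (conj_list \<psi>s) \<alpha>) \<chi> \<in> \<Delta>" by (rule dc_mem[OF dc, rotated])
      define \<theta>s where "\<theta>s = concat (map (\<lambda>\<beta>. filter (\<lambda>x. x \<noteq> \<beta>) (f \<beta>)) \<beta>s) @ [\<alpha>]"
      have sM: "set \<theta>s \<subseteq> M"
      proof
        fix x assume "x \<in> set \<theta>s"
        then have "x = \<alpha> \<or> (\<exists>\<beta>\<in>set \<beta>s. x \<in> set (f \<beta>) \<and> x \<noteq> \<beta>)" unfolding \<theta>s_def by auto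
        then show "x \<in> M"
        proof
          assume "x = \<alpha>" then show ?thesis using a by simp
        next
          assume "\<exists>\<beta>\<in>set \<beta>s. x \<in> set (f \<beta>) \<and> x \<noteq> \<beta>"
          then obtain \<beta> where "\<beta> \<in> set \<beta>s" "x \<in> set (f \<beta>)" "x \<noteq> \<beta>" by blast
          then show ?thesis using f by blast
        qed
      qed
      let ?X = "conj_list (\<phi> # \<theta>s)"
      have "\<forall>p\<in>set \<psi>s. D {?X} p"
      proof
        fix p assume "p \<in> set \<psi>s"
        then obtain \<beta> where b: "\<beta> \<in> set \<beta>s" "p = ps \<beta>" unfolding \<psi>s_def by auto
        have "\<forall>y\<in>set (\<phi> # filter (\<lambda>x. x \<noteq> \<beta>) (f \<beta>)). D {?X} y"
        proof
          fix y assume "y \<in> set (\<phi> # filter (\<lambda>x. x \<noteq> \<beta>) (f \<beta>))"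
          then have "y \<in> set (\<phi> # \<theta>s)" using b(1) unfolding \<theta>s_def by auto
          then show "D {?X} y" by (rule cl_E)
        qed
        then have "D {?X} (conj_list (\<phi> # filter (\<lambda>x. x \<noteq> \<beta>) (f \<beta>)))"
          by (intro cl_intro) simp_all
        then show "D {?X} p" unfolding b(2) ps_def .
      qed
      moreover have "\<psi>s \<noteq> []"
      proof -
        have "length \<beta>s \<ge> 2" using a unfolding satisfies_pair_def by (elim conjE)
        then show ?thesis using len by auto
      qed
      ultimately have c1: "D {?X} (conj_list \<psi>s)" by (intro cl_intro)
      have c2: "D {?X} \<alpha>" by (rule cl_E) (simp add: \<theta>s_def)
      have "D {?X} (Conj (conj_list \<psi>s) \<alpha>)"
      proof (rule multicut'[of "{conj_list \<psi>s, \<alpha>}" "{?X}"])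
        show "finite {conj_list \<psi>s, \<alpha>}" by simp
        show "\<forall>x\<in>{conj_list \<psi>s, \<alpha>}. D {?X} x" using c1 c2 by simp
        show "D {conj_list \<psi>s, \<alpha>} (Conj (conj_list \<psi>s) \<alpha>)" by (rule conjI')
      qed
      then have "Imp ?X \<chi> \<in> \<Delta>" by (rule pull[OF dc P])
      moreover have "Imp ?X \<chi> \<notin> \<Delta>" using gM sM unfolding good_def by simp
      ultimately show False by simp
    qed
  qed
  have "M \<in> Wc D" using consM dcM pr unfolding Wc_def by blast
  then show ?thesis using R phiM chiM by blast
qed

end

context cr
begin

lemma Wdc: "\<Gamma> \<in> Wc D \<Longrightarrow> deduction_closed D \<Gamma>" unfolding Wc_def by simp
lemma Wcons: "\<Gamma> \<in> Wc D \<Longrightarrow> consistent D \<Gamma>" unfolding Wc_def by simp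
lemma Wprime: "\<Gamma> \<in> Wc D \<Longrightarrow> prime D \<Gamma>" unfolding Wc_def by simp
lemma thm_in: "\<Gamma> \<in> Wc D \<Longrightarrow> D {} x \<Longrightarrow> x \<in> \<Gamma>"
  using dc_mem[OF Wdc, of \<Gamma> "{}"] by simp
lemma one_in: "\<Gamma> \<in> Wc D \<Longrightarrow> D {a} x \<Longrightarrow> a \<in> \<Gamma> \<Longrightarrow> x \<in> \<Gamma>"
  using dc_mem[OF Wdc, of \<Gamma> "{a}"] by simp
lemma bot_notin: "\<Gamma> \<in> Wc D \<Longrightarrow> Bot \<notin> \<Gamma>"
  using incons[OF Wdc] Wcons by blast
lemma Rc_iff: "(\<Gamma>, \<Delta>) \<in> Rc D \<longleftrightarrow> \<Gamma> \<in> Wc D \<and> \<Delta> \<in> Wc D \<and> R_imp \<Gamma> \<Delta>"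
  unfolding Rc_def by simp
lemma Rmp: "(\<Gamma>, \<Delta>) \<in> Rc D \<Longrightarrow> Imp a b \<in> \<Gamma> \<Longrightarrow> a \<in> \<Delta> \<Longrightarrow> b \<in> \<Delta>"
  unfolding Rc_iff R_imp_def by blast

lemma model: "consistent D {} \<Longrightarrow> is_model (Wc D) (Rc D) (Vc D)"
  unfolding is_model_def using W_ne by (auto simp: Rc_def Vc_def)

lemma Pminus:
  assumes "rule_PropMinus D" "consistent D {}"
  shows "in_D_Pminus (Wc D) (Rc D) (Vc D)"
  unfolding in_D_Pminus_def
proof (intro conjI allI subsetI)
  show "is_model (Wc D) (Rc D) (Vc D)" using model assms(2) .
  fix p \<Gamma> assume G: "\<Gamma> \<in> Vc D p"
  then have GW: "\<Gamma> \<in> Wc D" and Gp: "Atom p \<in> \<Gamma>" unfolding Vc_def by auto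
  have I: "Imp (Imp (Imp Bot Bot) Bot) (Atom p) \<in> \<Gamma>"
  proof -
    have "D {Atom p} (Imp (Imp (Imp Bot Bot) Bot) (Atom p))" using assms(1) unfolding rule_PropMinus_def by blast
    from one_in[OF GW this Gp] show ?thesis .
  qed
  show "\<Gamma> \<in> Rbox (Wc D) (Rc D) (Wc D - Rbox (Wc D) (Rc D) {} \<union> Vc D p)"
    unfolding Rbox_def
  proof (intro CollectI conjI allI impI GW)
    fix \<Delta> assume R: "(\<Gamma>, \<Delta>) \<in> Rc D"
    then have DW: "\<Delta> \<in> Wc D" unfolding Rc_iff by simp
    show "\<Delta> \<in> Wc D - {s \<in> Wc D. \<forall>t. (s, t) \<in> Rc D \<longrightarrow> t \<in> {}} \<union> Vc D p"
    proof (cases "Atom p \<in> \<Delta>")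
      case True then show ?thesis using DW unfolding Vc_def by simp
    next
      case False
      then have "Imp (Imp Bot Bot) Bot \<notin> \<Delta>" using Rmp[OF R I] by blast
      then obtain \<Theta> where "\<Theta> \<in> Wc D" "R_imp \<Delta> \<Theta>" using existence[OF DW] by blast
      then have "(\<Delta>, \<Theta>) \<in> Rc D" using DW unfolding Rc_iff by simp
      then show ?thesis using DW by blast
    qed
  qed
qed

lemma prop_tr:
  assumes "rule_PropTr D"
  shows "is_proposition (Wc D) (Rc D) (Vc D p)"
  unfolding is_proposition_def
proof (intro conjI subsetI)
  show "\<And>x. x \<in> Vc D p \<Longrightarrow> x \<in> Wc D" unfolding Vc_def by simp
  fix \<Delta> assume "\<Delta> \<in> Rimg (Rc D) (Vc D p) \<inter> Rbox (Wc D) (Rc D) (Rimg (Rc D) (Vc D p))"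
  then obtain \<Gamma> where G: "\<Gamma> \<in> Vc D p" "(\<Gamma>, \<Delta>) \<in> Rc D" unfolding Rimg_def by blast
  then have GW: "\<Gamma> \<in> Wc D" and Gp: "Atom p \<in> \<Gamma>" unfolding Vc_def by auto
  have DW: "\<Delta> \<in> Wc D" using G(2) unfolding Rc_iff by simp
  have I: "Imp (Imp Bot Bot) (Atom p) \<in> \<Gamma>"
  proof -
    have "D {Atom p} (Imp (Imp Bot Bot) (Atom p))" using assms(1) unfolding rule_PropTr_def by blast
    from one_in[OF GW this Gp] show ?thesis .
  qed
  have "Imp Bot Bot \<in> \<Delta>" using thm_in[OF DW imp0] .
  then have "Atom p \<in> \<Delta>" using Rmp[OF G(2) I] by blast
  then show "\<Delta> \<in> Vc D p" using DW unfolding Vc_def by simp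
qed

lemma chain_imp: "D {X} Y \<Longrightarrow> Imp Y c \<in> G \<Longrightarrow> D G (Imp X c)"
proof -
  assume d: "D {X} Y" and i: "Imp Y c \<in> G"
  show ?thesis
  proof (rule multicut'[of "{Imp X Y, Imp Y c}" G])
    show "finite {Imp X Y, Imp Y c}" by simp
    have "D G (Imp X Y)" using mon[OF thm_of[OF d]] by simp
    then show "\<forall>x\<in>{Imp X Y, Imp Y c}. D G x" using ax[OF i] by simp
    show "D {Imp X Y, Imp Y c} (Imp X c)" by (rule imp2)
  qed
qed

lemma two_set: "{f i | i. i < Suc (Suc 0)} = {f 0, f (Suc 0)}"
  by (auto simp: less_Suc_eq)

lemma sat_sym:
  assumes s1: "rule_Sym1 D" and s2: "rule_Sym2 D"
  shows "satisfies_pair D \<phi> [\<psi>, Imp (Imp \<phi> \<psi>) Bot]"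
  unfolding satisfies_pair_def
proof (intro conjI allI impI)
  show "2 \<le> length [\<psi>, Imp (Imp \<phi> \<psi>) Bot]" by simp
  fix \<Gamma> c assume "\<forall>\<beta>\<in>set [\<psi>, Imp (Imp \<phi> \<psi>) Bot]. D (\<Gamma> \<union> {\<beta>}) c"
  then have "D (\<Gamma> \<union> {\<psi>}) c \<and> D (\<Gamma> \<union> {Imp (Imp \<phi> \<psi>) Bot}) c" by simp
  then show "D (\<Gamma> \<union> {\<phi>}) c" using s1[unfolded rule_Sym1_def, rule_format, of \<Gamma> \<psi> c \<phi>] by blast
next
  fix c :: "'a form" and \<psi>s :: "'a form list" assume l: "length \<psi>s = length [\<psi>, Imp (Imp \<phi> \<psi>) Bot]"
  then obtain a b :: "'a form" where ab: "\<psi>s = [a, b]"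
  proof -
    have "length \<psi>s = Suc (Suc 0)" using l by simp
    then show ?thesis using that by (auto simp: length_Suc_conv)
  qed
  let ?N = "Imp (Imp \<phi> \<psi>) Bot"
  let ?G = "{Imp (Conj a \<psi>) c, Imp (Conj b ?N) c}"
  have seteq: "{Imp (Conj (\<psi>s ! i) ([\<psi>, ?N] ! i)) c | i. i < length [\<psi>, ?N]} = ?G"
    unfolding ab using two_set[of "\<lambda>i. Imp (Conj ([a, b] ! i) ([\<psi>, ?N] ! i)) c"] by simp
  have cl2: "conj_list \<psi>s = Conj a b" using ab by simp
  let ?A = "Conj a b"
  have h1: "D {Conj ?A \<psi>} (Conj a \<psi>)"
  proof (rule multicut'[of "{a, \<psi>}"])
    have "D {Conj ?A \<psi>} a" using trans1[OF conjE1 conjE1] .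
    then show "\<forall>x\<in>{a, \<psi>}. D {Conj ?A \<psi>} x" using conjE2 by simp
  qed (simp_all add: conjI')
  have h2: "D {Conj ?A ?N} (Conj b ?N)"
  proof (rule multicut'[of "{b, ?N}"])
    have "D {Conj ?A ?N} b" using trans1[OF conjE1 conjE2] .
    then show "\<forall>x\<in>{b, ?N}. D {Conj ?A ?N} x" using conjE2 by simp
  qed (simp_all add: conjI')
  have "D ?G (Imp (Conj ?A \<phi>) c)"
  proof (rule multicut'[of "{Imp (Conj ?A \<psi>) c, Imp (Conj ?A ?N) c}"])
    show "\<forall>x\<in>{Imp (Conj ?A \<psi>) c, Imp (Conj ?A ?N) c}. D ?G x"
      using chain_imp[OF h1, of c ?G] chain_imp[OF h2, of c ?G] by simp
    show "D {Imp (Conj ?A \<psi>) c, Imp (Conj ?A ?N) c} (Imp (Conj ?A \<phi>) c)"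
      using s2 unfolding rule_Sym2_def by blast
  qed simp
  then show "D {Imp (Conj (\<psi>s ! i) ([\<psi>, ?N] ! i)) c | i. i < length [\<psi>, ?N]}
       (Imp (Conj (conj_list \<psi>s) \<phi>) c)" unfolding seteq cl2 .
qed

lemma symR:
  assumes "rule_Sym1 D" "rule_Sym2 D"
  shows "sym (Rc D)"
proof (rule symI)
  fix \<Gamma> \<Delta> assume R: "(\<Gamma>, \<Delta>) \<in> Rc D"
  then have GW: "\<Gamma> \<in> Wc D" and DW: "\<Delta> \<in> Wc D" unfolding Rc_iff by auto
  have "R_imp \<Delta> \<Gamma>" unfolding R_imp_def
  proof (intro allI impI)
    fix \<phi> \<psi> assume a: "Imp \<phi> \<psi> \<in> \<Delta> \<and> \<phi> \<in> \<Gamma>"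
    have "\<exists>\<beta>\<in>set [\<psi>, Imp (Imp \<phi> \<psi>) Bot]. \<beta> \<in> \<Gamma>"
      using Wprime[OF GW] sat_sym[OF assms, of \<phi> \<psi>] a unfolding prime_def by blast
    moreover have "Imp (Imp \<phi> \<psi>) Bot \<notin> \<Gamma>"
    proof
      assume "Imp (Imp \<phi> \<psi>) Bot \<in> \<Gamma>"
      then have "Bot \<in> \<Delta>" using Rmp[OF R] a by blast
      then show False using bot_notin[OF DW] by simp
    qed
    ultimately show "\<psi> \<in> \<Gamma>" by simp
  qed
  then show "(\<Delta>, \<Gamma>) \<in> Rc D" using GW DW unfolding Rc_iff by simp
qed

lemma prop_sy:
  assumes "rule_PropSy D" "sym (Rc D)"
  shows "is_proposition (Wc D) (Rc D) (Vc D p)"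
  unfolding is_proposition_def
proof (intro conjI subsetI)
  show "\<And>x. x \<in> Vc D p \<Longrightarrow> x \<in> Wc D" unfolding Vc_def by simp
  fix \<Delta> assume H: "\<Delta> \<in> Rimg (Rc D) (Vc D p) \<inter> Rbox (Wc D) (Rc D) (Rimg (Rc D) (Vc D p))"
  then obtain \<Gamma> where G: "\<Gamma> \<in> Vc D p" "(\<Gamma>, \<Delta>) \<in> Rc D" unfolding Rimg_def by blast
  then have GW: "\<Gamma> \<in> Wc D" and Gp: "Atom p \<in> \<Gamma>" unfolding Vc_def by auto
  have DW: "\<Delta> \<in> Wc D" using G(2) unfolding Rc_iff by simp
  have box: "\<forall>\<Theta>. (\<Delta>, \<Theta>) \<in> Rc D \<longrightarrow> \<Theta> \<in> Rimg (Rc D) (Vc D p)" using H unfolding Rbox_def by blast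
  let ?NP = "Imp (Atom p) Bot"
  have I: "Imp (Imp ?NP Bot) (Atom p) \<in> \<Gamma>"
  proof -
    have "D {Atom p} (Imp (Imp ?NP Bot) (Atom p))" using assms(1) unfolding rule_PropSy_def by blast
    from one_in[OF GW this Gp] show ?thesis .
  qed
  have "Imp ?NP Bot \<in> \<Delta>"
  proof (rule ccontr)
    assume "Imp ?NP Bot \<notin> \<Delta>"
    then obtain \<Theta> where T: "\<Theta> \<in> Wc D" "R_imp \<Delta> \<Theta>" "?NP \<in> \<Theta>" using existence[OF DW] by blast
    then have "(\<Delta>, \<Theta>) \<in> Rc D" using DW unfolding Rc_iff by simp
    then have "\<Theta> \<in> Rimg (Rc D) (Vc D p)" using box by blast
    then obtain \<Gamma>' where G': "\<Gamma>' \<in> Vc D p" "(\<Gamma>', \<Theta>) \<in> Rc D" unfolding Rimg_def by blast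
    then have "(\<Theta>, \<Gamma>') \<in> Rc D" using assms(2) unfolding sym_def by blast
    moreover have "Atom p \<in> \<Gamma>'" "\<Gamma>' \<in> Wc D" using G'(1) unfolding Vc_def by auto
    ultimately have "Bot \<in> \<Gamma>'" using Rmp T(3) by blast
    then show False using bot_notin \<open>\<Gamma>' \<in> Wc D\<close> by blast
  qed
  then have "Atom p \<in> \<Delta>" using Rmp[OF G(2) I] by blast
  then show "\<Delta> \<in> Vc D p" using DW unfolding Vc_def by simp
qed

lemma transR:
  assumes "rule_Tran D"
  shows "trans (Rc D)"
proof (rule transI)
  fix \<Gamma> \<Delta> \<Theta> assume R1: "(\<Gamma>, \<Delta>) \<in> Rc D" and R2: "(\<Delta>, \<Theta>) \<in> Rc D"
  then have GW: "\<Gamma> \<in> Wc D" and DW: "\<Delta> \<in> Wc D" and TW: "\<Theta> \<in> Wc D" unfolding Rc_iff by auto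
  have "R_imp \<Gamma> \<Theta>" unfolding R_imp_def
  proof (intro allI impI)
    fix \<phi> \<psi> assume a: "Imp \<phi> \<psi> \<in> \<Gamma> \<and> \<phi> \<in> \<Theta>"
    have "Imp (Imp Bot Bot) (Imp \<phi> \<psi>) \<in> \<Gamma>"
    proof -
      have "D {Imp \<phi> \<psi>} (Imp (Imp Bot Bot) (Imp \<phi> \<psi>))" using assms unfolding rule_Tran_def by blast
      from one_in[OF GW this conjunct1[OF a]] show ?thesis .
    qed
    moreover have "Imp Bot Bot \<in> \<Delta>" using thm_in[OF DW imp0] .
    ultimately have "Imp \<phi> \<psi> \<in> \<Delta>" using Rmp[OF R1] by blast
    then show "\<psi> \<in> \<Theta>" using Rmp[OF R2] a by blast
  qed
  then show "(\<Gamma>, \<Theta>) \<in> Rc D" using GW TW unfolding Rc_iff by simp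
qed

lemma reflR:
  assumes "rule_Refl D"
  shows "refl_on (Wc D) (Rc D)"
proof (rule refl_onI)
  fix \<Gamma> assume GW: "\<Gamma> \<in> Wc D"
  have "R_imp \<Gamma> \<Gamma>" unfolding R_imp_def
  proof (intro allI impI)
    fix \<phi> \<psi> assume a: "Imp \<phi> \<psi> \<in> \<Gamma> \<and> \<phi> \<in> \<Gamma>"
    have "D {\<phi>, Imp \<phi> \<psi>} \<psi>" using assms unfolding rule_Refl_def by blast
    then show "\<psi> \<in> \<Gamma>" using dc_mem[OF Wdc[OF GW], of "{\<phi>, Imp \<phi> \<psi>}"] a by simp
  qed
  then show "(\<Gamma>, \<Gamma>) \<in> Rc D" using GW unfolding Rc_iff by simp
qed

end
theorem mainTheorem14:
  fixes D :: "('a::countable) cons_rel"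
  assumes "rule_A D" "rule_Mon D" "rule_Cut D" "rule_Com D" "rule_Bot D"
    "rule_ConjI D" "rule_ConjE D" "rule_Imp0 D" "rule_Imp1 D" "rule_Imp2 D"
    and nontriv: "consistent D {}"
  shows "(rule_PropMinus D \<longrightarrow> in_D_Pminus (Wc D) (Rc D) (Vc D))
    \<and> (rule_Tran D \<and> rule_PropTr D \<longrightarrow> in_D_V (Wc D) (Rc D) (Vc D))
    \<and> (rule_Sym1 D \<and> rule_Sym2 D \<and> rule_PropSy D \<longrightarrow> in_D_Bp (Wc D) (Rc D) (Vc D))
    \<and> (rule_Refl D \<and> rule_Sym1 D \<and> rule_Sym2 D \<and> rule_PropSy D \<longrightarrow> in_D_O (Wc D) (Rc D) (Vc D))
    \<and> (rule_Tran D \<and> rule_Sym1 D \<and> rule_Sym2 D \<and> rule_PropTr D \<longrightarrow> in_D_KB4p (Wc D) (Rc D) (Vc D))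
    \<and> (rule_Refl D \<and> rule_Tran D \<and> rule_PropTr D \<longrightarrow> in_D_I (Wc D) (Rc D) (Vc D))
    \<and> (rule_Refl D \<and> rule_Sym1 D \<and> rule_Sym2 D \<and> rule_Tran D \<and> rule_PropTr D \<longrightarrow> in_D_C (Wc D) (Rc D) (Vc D))"
proof -
  interpret cr D using assms(1-10) by unfold_locales
  have mdl: "is_model (Wc D) (Rc D) (Vc D)" using model nontriv .
  have itr: "rule_PropTr D \<Longrightarrow> is_interpretation (Wc D) (Rc D) (Vc D)"
    using mdl prop_tr unfolding is_interpretation_def by blast
  have isy: "rule_Sym1 D \<Longrightarrow> rule_Sym2 D \<Longrightarrow> rule_PropSy D \<Longrightarrow> is_interpretation (Wc D) (Rc D) (Vc D)"
    using mdl prop_sy symR unfolding is_interpretation_def by blast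
  show ?thesis
  proof (intro conjI impI)
    show "rule_PropMinus D \<Longrightarrow> in_D_Pminus (Wc D) (Rc D) (Vc D)" using Pminus nontriv by blast
    show "rule_Tran D \<and> rule_PropTr D \<Longrightarrow> in_D_V (Wc D) (Rc D) (Vc D)"
      unfolding in_D_V_def using itr transR by blast
    show "rule_Sym1 D \<and> rule_Sym2 D \<and> rule_PropSy D \<Longrightarrow> in_D_Bp (Wc D) (Rc D) (Vc D)"
      unfolding in_D_Bp_def using isy symR by blast
    show "rule_Refl D \<and> rule_Sym1 D \<and> rule_Sym2 D \<and> rule_PropSy D \<Longrightarrow> in_D_O (Wc D) (Rc D) (Vc D)"
      unfolding in_D_O_def using isy symR reflR by blast
    show "rule_Tran D \<and> rule_Sym1 D \<and> rule_Sym2 D \<and> rule_PropTr D \<Longrightarrow> in_D_KB4p (Wc D) (Rc D) (Vc D)"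
      unfolding in_D_KB4p_def using itr symR transR by blast
    show "rule_Refl D \<and> rule_Tran D \<and> rule_PropTr D \<Longrightarrow> in_D_I (Wc D) (Rc D) (Vc D)"
      unfolding in_D_I_def using itr transR reflR by blast
    show "rule_Refl D \<and> rule_Sym1 D \<and> rule_Sym2 D \<and> rule_Tran D \<and> rule_PropTr D \<Longrightarrow> in_D_C (Wc D) (Rc D) (Vc D)"
      unfolding in_D_C_def using itr symR transR reflR by blast
  qed
qed

end
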